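(* Let $p$ be a stochastic choice function rationalized by an MSC $\langle Q,\nu\rangle$. For every $M\in\mathcal N$ and distinct $i,j\in M$ with $p(i,\{i,j\})\in(0,1)$, $$\frac{\delta_{ij}(M)\,q_{ij}(M)}{p(j,\{i,j\})}=-\frac{\delta_{ji}(M)\,q_{ji}(M)}{p(i,\{i,j\})}.$$
   Context: $X$ is a finite set of alternatives; a menu is a nonempty subset of $X$, and $\mathcal N$ denotes the set of all menus. A stochastic choice function is a map $p:X\times\mathcal N\to[0,1]$ with $\sum_{i\in M}p(i,M)=1$ and $p(i,M)=0$ for $i\notin M$; $p(\cdot,M)$ denotes the row vector $(p(i,M))_{i\in M}$. For $M\in\mathcal N$ and $i,j\in M$ let $\delta_{ij}(M)=p(i,M)\,p(j,\{i,j\})-p(i,\{i,j\})\,p(j,M)$. An MSC (Markov stochastic choice model) $\langle Q,\nu\rangle$ consists of, for every menu $M$, a matrix $Q(M)=(q_{ij}(M))_{i,j\in M}$ with nonnegative entries and a probability distribution $\nu_M$ on $M$, such that for all $M\in\mathcal N$ and distinct $i,j\in M$: (A1) $q_{ii}(M)=1-\sum_{k\neq i}q_{ik}(M)>0$; (A2) if $q_{ij}(\{i,j\})=0$ then $q_{ji}(\{i,j\})>0$; (A3) $q_{ij}(\{i,j\})\,q_{ji}(M)=q_{ji}(\{i,j\})\,q_{ij}(M)$. For a right stochastic matrix $Q$ on $M$ and a distribution $\nu$ on $M$ define $\rho(\nu,Q)=\lim_{\alpha\to0^+}\sum_{t\ge0}\alpha(1-\alpha)^t\nu Q^t$ (the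 limit exists and satisfies $\rho(\nu,Q)(I-Q)=0$). $p$ is rationalized by the MSC $\langle Q,\nu\rangle$ if $p(\cdot,M)=\rho(\nu_M,Q(M))$ for every $M\in\mathcal N$. *)

theory Defs
  imports "HOL-Analysis.Analysis"
begin

definition menu :: "'a::finite set \<Rightarrow> bool" where
  "menu M \<longleftrightarrow> M \<noteq> {}"

definition stoch_choice :: "('a::finite \<Rightarrow> 'a set \<Rightarrow> real) \<Rightarrow> bool" where
  "stoch_choice p \<longleftrightarrow> (\<forall>M. menu M \<longrightarrow>
      (\<forall>i. 0 \<le> p i M \<and> p i M \<le> 1) \<and>
      (\<Sum>i\<in>M. p i M) = 1 \<and>
      (\<forall>i. i \<notin> M \<longrightarrow> p i M = 0))"

definition delta :: "('a \<Rightarrow> 'a set \<Rightarrow> real) \<Rightarrow> 'a set \<Rightarrow> 'a \<Rightarrow> 'a \<Rightarrow> real" where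
  "delta p M i j = p i M * p j {i, j} - p i {i, j} * p j M"

fun mpow :: "'a set \<Rightarrow> ('a \<Rightarrow> 'a \<Rightarrow> real) \<Rightarrow> nat \<Rightarrow> 'a \<Rightarrow> 'a \<Rightarrow> real" where
  "mpow M Q 0 i j = (if i = j then 1 else 0)"
| "mpow M Q (Suc t) i j = (\<Sum>k\<in>M. mpow M Q t i k * Q k j)"

definition vpow :: "'a set \<Rightarrow> ('a \<Rightarrow> real) \<Rightarrow> ('a \<Rightarrow> 'a \<Rightarrow> real) \<Rightarrow> nat \<Rightarrow> 'a \<Rightarrow> real" where
  "vpow M \<nu> Q t j = (\<Sum>i\<in>M. \<nu> i * mpow M Q t i j)"

(* An MSC <Q,\<nu>>: Q M i j = q_ij(M), \<nu> M i = \<nu>_M(i) *)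
definition MSC :: "('a::finite set \<Rightarrow> 'a \<Rightarrow> 'a \<Rightarrow> real) \<Rightarrow> ('a set \<Rightarrow> 'a \<Rightarrow> real) \<Rightarrow> bool" where
  "MSC Q \<nu> \<longleftrightarrow> (\<forall>M. menu M \<longrightarrow>
      (\<forall>i\<in>M. \<forall>j\<in>M. 0 \<le> Q M i j) \<and>
      (\<forall>i\<in>M. 0 \<le> \<nu> M i) \<and> (\<Sum>i\<in>M. \<nu> M i) = 1 \<and>
      (\<forall>i\<in>M. Q M i i = 1 - (\<Sum>k\<in>M - {i}. Q M i k) \<and> Q M i i > 0) \<and>
      (\<forall>i\<in>M. \<forall>j\<in>M. i \<noteq> j \<longrightarrow>
          (Q {i, j} i j = 0 \<longrightarrow> Q {i, j} j i > 0) \<and>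
          Q {i, j} i j * Q M j i = Q {i, j} j i * Q M i j))"

definition rationalized_by ::
  "('a::finite \<Rightarrow> 'a set \<Rightarrow> real) \<Rightarrow> ('a set \<Rightarrow> 'a \<Rightarrow> 'a \<Rightarrow> real) \<Rightarrow> ('a set \<Rightarrow> 'a \<Rightarrow> real) \<Rightarrow> bool" where
  "rationalized_by p Q \<nu> \<longleftrightarrow> (\<forall>M. menu M \<longrightarrow> (\<forall>j\<in>M.
      ((\<lambda>\<alpha>. \<Sum>t. \<alpha> * (1 - \<alpha>) ^ t * vpow M (\<nu> M) (Q M) t j) \<longlongrightarrow> p j M) (at_right 0)))"

end

theory Submission
  imports Defs
begin

lemma vpow_Suc: "vpow M nu Q (Suc t) j = (\<Sum>k\<in>M. vpow M nu Q t k * Q k j)"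
proof -
  have "vpow M nu Q (Suc t) j = (\<Sum>i\<in>M. \<Sum>k\<in>M. nu i * mpow M Q t i k * Q k j)"
    unfolding vpow_def by (simp add: sum_distrib_left mult.assoc)
  also have "\<dots> = (\<Sum>k\<in>M. \<Sum>i\<in>M. nu i * mpow M Q t i k * Q k j)"
    by (rule sum.swap)
  also have "\<dots> = (\<Sum>k\<in>M. vpow M nu Q t k * Q k j)"
    unfolding vpow_def by (simp add: sum_distrib_right)
  finally show ?thesis .
qed

lemma vpow_0: "j \<in> M \<Longrightarrow> finite M \<Longrightarrow> vpow M nu Q 0 j = nu j"
  unfolding vpow_def by (simp add: if_distrib cong: if_cong)

lemma vpow_dist:
  assumes "finite M" "\<forall>k\<in>M. \<forall>j\<in>M. 0 \<le> Q k j" "\<forall>k\<in>M. (\<Sum>j\<in>M. Q k j) = 1"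
    "\<forall>k\<in>M. 0 \<le> nu k" "(\<Sum>k\<in>M. nu k) = 1"
  shows "(\<forall>j\<in>M. 0 \<le> vpow M nu Q t j) \<and> (\<Sum>j\<in>M. vpow M nu Q t j) = 1"
proof (induction t)
  case 0
  then show ?case using assms by (simp add: vpow_0)
next
  case (Suc t)
  have "(\<Sum>j\<in>M. vpow M nu Q (Suc t) j) = (\<Sum>k\<in>M. vpow M nu Q t k * (\<Sum>j\<in>M. Q k j))"
  proof -
    have "(\<Sum>j\<in>M. vpow M nu Q (Suc t) j) = (\<Sum>j\<in>M. \<Sum>k\<in>M. vpow M nu Q t k * Q k j)"
      by (simp only: vpow_Suc)
    also have "\<dots> = (\<Sum>k\<in>M. \<Sum>j\<in>M. vpow M nu Q t k * Q k j)"
      by (rule sum.swap)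
    also have "\<dots> = (\<Sum>k\<in>M. vpow M nu Q t k * (\<Sum>j\<in>M. Q k j))"
      by (simp add: sum_distrib_left)
    finally show ?thesis .
  qed
  also have "\<dots> = 1" using Suc assms by simp
  finally show ?case using Suc assms by (auto simp: vpow_Suc intro!: sum_nonneg)
qed

lemma vpow_bound:
  assumes "finite M" "\<forall>k\<in>M. \<forall>j\<in>M. 0 \<le> Q k j" "\<forall>k\<in>M. (\<Sum>j\<in>M. Q k j) = 1"
    "\<forall>k\<in>M. 0 \<le> nu k" "(\<Sum>k\<in>M. nu k) = 1" "j \<in> M"
  shows "0 \<le> vpow M nu Q t j \<and> vpow M nu Q t j \<le> 1"
proof -
  note d = vpow_dist[OF assms(1-5), of t]
  have "vpow M nu Q t j \<le> (\<Sum>j\<in>M. vpow M nu Q t j)"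
    using d assms(1,6) by (intro member_le_sum) auto
  then show ?thesis using d assms(6) by auto
qed

lemma stationary:
  fixes M :: "'a set" and nu :: "'a \<Rightarrow> real" and Q :: "'a\<Rightarrow>'a\<Rightarrow>real" and P :: "'a \<Rightarrow> real"
  assumes fin: "finite M" and Qn: "\<forall>k\<in>M. \<forall>j\<in>M. 0 \<le> Q k j" and Qs: "\<forall>k\<in>M. (\<Sum>j\<in>M. Q k j) = 1"
    and nn: "\<forall>k\<in>M. 0 \<le> nu k" and ns: "(\<Sum>k\<in>M. nu k) = 1"
    and lim: "\<forall>j\<in>M. ((\<lambda>\<alpha>. \<Sum>t. \<alpha>*(1-\<alpha>)^t * vpow M nu Q t j) \<longlongrightarrow> P j) (at_right 0)"
    and jM: "j \<in> M"
  shows "P j = (\<Sum>k\<in>M. P k * Q k j)"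
proof -
  define v where "v = vpow M nu Q"
  define S where "S = (\<lambda>\<alpha> k. \<Sum>t. \<alpha>*(1-\<alpha>)^t * v t k)"
  have bd: "\<And>t k. k \<in> M \<Longrightarrow> 0 \<le> v t k \<and> v t k \<le> 1"
    unfolding v_def using vpow_bound[OF fin Qn Qs nn ns] by blast
  have summ: "summable (\<lambda>t. \<alpha>*(1-\<alpha>)^t * v t k)" if "0 < \<alpha>" "\<alpha> < 1" "k \<in> M" for \<alpha> k
  proof (rule summable_comparison_test)
    show "\<exists>N. \<forall>n\<ge>N. norm (\<alpha>*(1-\<alpha>)^n * v n k) \<le> \<alpha>*(1-\<alpha>)^n"
      using bd[OF that(3)] that(1,2)
      by (intro exI[of _ 0] allI impI) (simp add: abs_mult mult_left_le)
    show "summable (\<lambda>n. \<alpha>*(1-\<alpha>)^n)"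
      using that by (intro summable_mult summable_geometric) auto
  qed
  have key: "(1-\<alpha>) * (\<Sum>k\<in>M. S \<alpha> k * Q k j) = S \<alpha> j - \<alpha> * v 0 j"
    if "0 < \<alpha>" "\<alpha> < 1" for \<alpha>
  proof -
    have "(\<Sum>k\<in>M. S \<alpha> k * Q k j) = (\<Sum>k\<in>M. \<Sum>t. \<alpha>*(1-\<alpha>)^t * v t k * Q k j)"
      unfolding S_def using summ[OF that] by (intro sum.cong refl suminf_mult2) auto
    also have "\<dots> = (\<Sum>t. \<Sum>k\<in>M. \<alpha>*(1-\<alpha>)^t * v t k * Q k j)"
      using summ[OF that] by (intro suminf_sum[symmetric] summable_mult2) auto
    also have "\<dots> = (\<Sum>t. \<alpha>*(1-\<alpha>)^t * v (Suc t) j)"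
      unfolding v_def vpow_Suc by (simp add: sum_distrib_left mult.assoc)
    finally have e: "(\<Sum>k\<in>M. S \<alpha> k * Q k j) = (\<Sum>t. \<alpha>*(1-\<alpha>)^t * v (Suc t) j)" .
    have s2: "summable (\<lambda>t. \<alpha>*(1-\<alpha>)^t * v (Suc t) j)"
    proof -
      have "summable (\<lambda>t. \<alpha>*(1-\<alpha>)^(Suc t) * v (Suc t) j)"
        using summ[OF that jM] by (subst summable_Suc_iff)
      then have "summable (\<lambda>t. (1/(1-\<alpha>)) * (\<alpha>*(1-\<alpha>)^(Suc t) * v (Suc t) j))"
        by (rule summable_mult)
      moreover have "\<And>t. (1/(1-\<alpha>)) * (\<alpha>*(1-\<alpha>)^(Suc t) * v (Suc t) j) = \<alpha>*(1-\<alpha>)^t * v (Suc t) j"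
        using that by simp
      ultimately show ?thesis by simp
    qed
    have "(1-\<alpha>) * (\<Sum>t. \<alpha>*(1-\<alpha>)^t * v (Suc t) j) = (\<Sum>t. (1-\<alpha>) * (\<alpha>*(1-\<alpha>)^t * v (Suc t) j))"
      using s2 by (rule suminf_mult[symmetric])
    also have "\<dots> = (\<Sum>t. \<alpha>*(1-\<alpha>)^(Suc t) * v (Suc t) j)"
      by (simp add: algebra_simps)
    also have "\<dots> = S \<alpha> j - \<alpha>*(1-\<alpha>)^0 * v 0 j"
      unfolding S_def using summ[OF that jM] by (rule suminf_split_head)
    finally show ?thesis using e by simp
  qed
  have Sk: "((\<lambda>\<alpha>. S \<alpha> k) \<longlongrightarrow> P k) (at_right 0)" if "k \<in> M" for k
    unfolding S_def v_def by (rule lim[rule_format, OF that])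
  have L1: "((\<lambda>\<alpha>. (1-\<alpha>) * (\<Sum>k\<in>M. S \<alpha> k * Q k j)) \<longlongrightarrow> (1-0) * (\<Sum>k\<in>M. P k * Q k j)) (at_right 0)"
    by (rule tendsto_mult[OF tendsto_diff[OF tendsto_const tendsto_ident_at] tendsto_sum[OF tendsto_mult[OF Sk tendsto_const]]])
  have L2: "((\<lambda>\<alpha>. S \<alpha> j - \<alpha> * v 0 j) \<longlongrightarrow> P j - 0 * v 0 j) (at_right 0)"
    by (rule tendsto_diff[OF Sk[OF jM] tendsto_mult[OF tendsto_ident_at tendsto_const]])
  have ev: "eventually (\<lambda>\<alpha>. (1-\<alpha>) * (\<Sum>k\<in>M. S \<alpha> k * Q k j) = S \<alpha> j - \<alpha> * v 0 j) (at_right (0::real))"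
    by (rule eventually_mono[OF eventually_at_right_real[of 0 1]]) (use key in auto)
  have L1': "((\<lambda>\<alpha>. S \<alpha> j - \<alpha> * v 0 j) \<longlongrightarrow> (1-0) * (\<Sum>k\<in>M. P k * Q k j)) (at_right 0)"
    using tendsto_cong[OF ev] L1 by (rule iffD1)
  have "(1-0) * (\<Sum>k\<in>M. P k * Q k j) = P j - 0 * v 0 j"
    using tendsto_unique[OF trivial_limit_at_right_real L1' L2] .
  then show ?thesis by simp
qed


theorem lemmaA2:
  fixes p :: "'a::finite \<Rightarrow> 'a set \<Rightarrow> real"
    and Q :: "'a set \<Rightarrow> 'a \<Rightarrow> 'a \<Rightarrow> real"
    and \<nu> :: "'a set \<Rightarrow> 'a \<Rightarrow> real"
  assumes "stoch_choice p" and "MSC Q \<nu>" and "rationalized_by p Q \<nu>"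
    and "menu M" and "i \<in> M" and "j \<in> M" and "i \<noteq> j"
    and "0 < p i {i, j}" and "p i {i, j} < 1"
  shows "delta p M i j * Q M i j / p j {i, j} = - (delta p M j i * Q M j i / p i {i, j})"
proof -
  define N where "N = {i, j}"
  have mN: "menu N" unfolding N_def menu_def by auto
  have finN: "finite N" unfolding N_def by auto
  note mscN = assms(2)[unfolded MSC_def, THEN spec[of _ N], THEN mp, OF mN]
  have Qn: "\<forall>a\<in>N. \<forall>b\<in>N. 0 \<le> Q N a b" using mscN by (rule conjunct1)
  have nn: "\<forall>a\<in>N. 0 \<le> \<nu> N a" using mscN[THEN conjunct2] by (rule conjunct1)
  have ns: "(\<Sum>a\<in>N. \<nu> N a) = 1" using mscN[THEN conjunct2, THEN conjunct2] by (rule conjunct1)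
  have dg: "\<forall>a\<in>N. Q N a a = 1 - (\<Sum>k\<in>N - {a}. Q N a k) \<and> Q N a a > 0"
    using mscN[THEN conjunct2, THEN conjunct2, THEN conjunct2] by (rule conjunct1)
  have rows: "\<forall>a\<in>N. (\<Sum>b\<in>N. Q N a b) = 1"
  proof
    fix a assume a: "a \<in> N"
    have d: "Q N a a = 1 - (\<Sum>k\<in>N - {a}. Q N a k)" using dg a by blast
    have "(\<Sum>b\<in>N. Q N a b) = Q N a a + (\<Sum>b\<in>N - {a}. Q N a b)"
      by (rule sum.remove[OF finN a])
    also have "\<dots> = 1" using d by linarith
    finally show "(\<Sum>b\<in>N. Q N a b) = 1" .
  qed
  have lim: "\<forall>b\<in>N. ((\<lambda>\<alpha>. \<Sum>t. \<alpha>*(1-\<alpha>)^t * vpow N (\<nu> N) (Q N) t b) \<longlongrightarrow> p b N) (at_right 0)"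
    using assms(3)[unfolded rationalized_by_def, THEN spec[of _ N], THEN mp, OF mN] .
  have iN: "i \<in> N" and jN: "j \<in> N" unfolding N_def by auto
  have st: "p i N = (\<Sum>k\<in>N. p k N * Q N k i)"
    by (rule stationary[OF finN Qn rows nn ns lim iN])
  have dgi: "Q N i i = 1 - (\<Sum>k\<in>N - {i}. Q N i k)" using dg iN by blast
  have Ni: "N - {i} = {j}" unfolding N_def using assms(7) by auto
  have qii: "Q N i i = 1 - Q N i j"
    using dgi unfolding Ni by simp
  have sp: "(\<Sum>k\<in>N. p k N * Q N k i) = p i N * Q N i i + p j N * Q N j i"
    unfolding N_def using assms(7) by simp
  have st2: "p i N = p i N * (1 - Q N i j) + p j N * Q N j i"
    using trans[OF st sp] unfolding qii .
  have e: "p i N * (1 - Q N i j) = p i N - p i N * Q N i j" by (simp add: algebra_simps)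
  have bal: "p i N * Q N i j = p j N * Q N j i"
    using st2 e by linarith
  have sN: "(\<Sum>a\<in>N. p a N) = 1"
    using assms(1)[unfolded stoch_choice_def, THEN spec[of _ N], THEN mp, OF mN, THEN conjunct2, THEN conjunct1] .
  have sumN: "p i N + p j N = 1"
    using sN assms(7) unfolding N_def by simp
  have mM: "\<forall>a\<in>M. \<forall>b\<in>M. a \<noteq> b \<longrightarrow>
          (Q {a, b} a b = 0 \<longrightarrow> Q {a, b} b a > 0) \<and>
          Q {a, b} a b * Q M b a = Q {a, b} b a * Q M a b"
    using assms(2)[unfolded MSC_def, THEN spec[of _ M], THEN mp, OF assms(4), THEN conjunct2, THEN conjunct2,
       THEN conjunct2, THEN conjunct2] .
  have "(Q N i j = 0 \<longrightarrow> Q N j i > 0) \<and> Q N i j * Q M j i = Q N j i * Q M i j"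
    unfolding N_def by (rule mM[rule_format, OF assms(5) assms(6) assms(7)])
  then have a3: "Q N i j * Q M j i = Q N j i * Q M i j" and a2: "Q N i j = 0 \<longrightarrow> Q N j i > 0"
    by auto
  have pj: "p j {j, i} = p j N" "p i {j, i} = p i N" unfolding N_def by (auto simp: insert_commute)
  have pos: "0 < p i N" "0 < p j N" using assms(8,9) sumN unfolding N_def by auto
  have xpos: "Q N i j > 0"
  proof (rule ccontr)
    assume "\<not> Q N i j > 0"
    moreover have "Q N i j \<ge> 0" using Qn iN jN by blast
    ultimately have "Q N i j = 0" by auto
    then have "Q N j i > 0" using a2 by auto
    then show False using bal \<open>Q N i j = 0\<close> pos by simp
  qed
  have key: "p i N * Q M i j = p j N * Q M j i"
  proof -
    have "Q N i j * (p j N * Q M j i) = p j N * (Q N i j * Q M j i)" by (rule mult.left_commute)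
    also have "\<dots> = p j N * (Q N j i * Q M i j)" by (simp only: a3)
    also have "\<dots> = (p j N * Q N j i) * Q M i j" by (rule mult.assoc[symmetric])
    also have "\<dots> = (p i N * Q N i j) * Q M i j" by (simp only: bal)
    also have "\<dots> = Q N i j * (p i N * Q M i j)" by (simp only: mult_ac)
    finally show ?thesis using xpos by simp
  qed
  have dji: "delta p M j i = - delta p M i j"
    unfolding delta_def by (simp add: insert_commute algebra_simps)
  have key': "Q M i j * p i N = Q M j i * p j N"
    using key by (simp add: mult.commute)
  have r: "Q M i j / p j N = Q M j i / p i N"
    using key' pos by (simp add: frac_eq_eq)
  have e1: "delta p M i j * Q M i j / p j N = delta p M i j * (Q M i j / p j N)"
    by simp
  have e2: "- (delta p M j i * Q M j i / p i N) = delta p M i j * (Q M j i / p i N)"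
    unfolding dji by simp
  have "delta p M i j * Q M i j / p j N = - (delta p M j i * Q M j i / p i N)"
    unfolding e1 e2 r ..
  then show ?thesis unfolding N_def .
qed

end
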